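(* Let $\langle X,\tau\rangle$ be a Hausdorff space. Suppose there are a dense subset $Q\subseteq X$ and an asymmetric binary relation $R$ on $X$ such that $\langle X,\tau\rangle$ is $R$-bidirected along $Q$. Then $\langle X,\tau\rangle$ is not a continuous open image of the Sorgenfrey line.
   Context: The Sorgenfrey line is $\mathbb R$ with topology generated by $\{[a,b)\}$; "continuous open image" means image under a continuous open surjection. $R$ is asymmetric if $xRy$ implies $\neg yRx$. For $y\in X$: $y{\downarrow}_R=\{z:zRy\}$, $y{\uparrow}_R=\{z:yRz\}$. For $Q$ dense and $x\in X$: an open neighborhood $U$ of $x$ is $R$-right along $Q$ if $xRy$ for all $y\in(U\setminus\{x\})\cap Q$; $x$ looks to the $R$-right along $Q$ if some open neighborhood of $x$ is $R$-right along $Q$ and for every open neighborhood $U$ of $x$ there is $y\in(U\setminus\{x\})\cap Q$ such that $y{\downarrow}_R$ is a neighborhood of $x$. Symmetrically, $U$ is $R$-left along $Q$ if $yRx$ for all $y\in(U\setminus\{x\})\cap Q$; $x$ looks to the $R$-left along $Q$ if some open neighborhood of $x$ is $R$-left along $Q$ and for every open neighborhood $U$ of $x$ there is $y\in(U\setminus\{x\})\cap Q$ with $y{\uparrow}_R$ a neighborhood of $x$. $\langle X,\tau\rangle$ is $R$-bidirected along $Q$ if there are dense sets $A_l,A_r$ with $X=A_l\cup A_r$, $A_l\cap A_r=\emptyset$, every $x\in A_r$ looks to the $R$-right along $Q$ and every $x\in A_l$ looks to the $R$-left along $Q$. *)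

theory Defs
  imports "HOL-Analysis.Analysis"
begin

definition sorgenfrey_line :: "real topology" where
  "sorgenfrey_line = topology_generated_by {{a..<b} | a b. a < b}"

definition continuous_open_image_of :: "'a topology \<Rightarrow> 'b topology \<Rightarrow> bool" where
  "continuous_open_image_of Y S \<longleftrightarrow>
     (\<exists>f. continuous_map S Y f \<and> open_map S Y f \<and> f ` topspace S = topspace Y)"

definition dense_in :: "'a topology \<Rightarrow> 'a set \<Rightarrow> bool" where
  "dense_in X Q \<longleftrightarrow> Q \<subseteq> topspace X \<and> X closure_of Q = topspace X"

definition asymmetric_on :: "'a set \<Rightarrow> ('a \<Rightarrow> 'a \<Rightarrow> bool) \<Rightarrow> bool" where
  "asymmetric_on A R \<longleftrightarrow> (\<forall>x\<in>A. \<forall>y\<in>A. R x y \<longrightarrow> \<not> R y x)"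

definition is_nbhd :: "'a topology \<Rightarrow> 'a set \<Rightarrow> 'a \<Rightarrow> bool" where
  "is_nbhd X N x \<longleftrightarrow> (\<exists>V. openin X V \<and> x \<in> V \<and> V \<subseteq> N)"

definition looks_right :: "'a topology \<Rightarrow> ('a \<Rightarrow> 'a \<Rightarrow> bool) \<Rightarrow> 'a set \<Rightarrow> 'a \<Rightarrow> bool" where
  "looks_right X R Q x \<longleftrightarrow>
     (\<exists>U. openin X U \<and> x \<in> U \<and> (\<forall>y \<in> (U - {x}) \<inter> Q. R x y)) \<and>
     (\<forall>U. openin X U \<and> x \<in> U \<longrightarrow>
        (\<exists>y \<in> (U - {x}) \<inter> Q. is_nbhd X {z \<in> topspace X. R z y} x))"

definition looks_left :: "'a topology \<Rightarrow> ('a \<Rightarrow> 'a \<Rightarrow> bool) \<Rightarrow> 'a set \<Rightarrow> 'a \<Rightarrow> bool" where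
  "looks_left X R Q x \<longleftrightarrow>
     (\<exists>U. openin X U \<and> x \<in> U \<and> (\<forall>y \<in> (U - {x}) \<inter> Q. R y x)) \<and>
     (\<forall>U. openin X U \<and> x \<in> U \<longrightarrow>
        (\<exists>y \<in> (U - {x}) \<inter> Q. is_nbhd X {z \<in> topspace X. R y z} x))"

definition bidirected :: "'a topology \<Rightarrow> ('a \<Rightarrow> 'a \<Rightarrow> bool) \<Rightarrow> 'a set \<Rightarrow> bool" where
  "bidirected X R Q \<longleftrightarrow>
     (\<exists>Al Ar. dense_in X Al \<and> dense_in X Ar \<and> topspace X = Al \<union> Ar \<and> Al \<inter> Ar = {} \<and>
        (\<forall>x\<in>Ar. looks_right X R Q x) \<and> (\<forall>x\<in>Al. looks_left X R Q x))"

end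

theory Submission
  imports Defs
begin

lemma sorg_topspace: "topspace sorgenfrey_line = UNIV"
proof -
  have "t \<in> \<Union>{{a..<b} | a b. a < (b::real)}" for t
  proof (rule UnionI[of "{t..<t+1}"])
    show "{t..<t+1} \<in> {{a..<b} | a b. a < (b::real)}" by force
  qed simp
  then show ?thesis unfolding sorgenfrey_line_def by auto
qed

lemma sorg_open_basic: "openin sorgenfrey_line {a..<b}"
proof (cases "a < b")
  case True then show ?thesis unfolding sorgenfrey_line_def
    by (intro topology_generated_by_Basis) auto
next
  case False then show ?thesis by simp
qed

lemma sorg_open_local:
  assumes "openin sorgenfrey_line V" "t \<in> V"
  shows "\<exists>e>0. {t..<t+e} \<subseteq> V"
proof -
  have "generate_topology_on {{a..<b} | a b. a < (b::real)} V"
    using assms(1) unfolding sorgenfrey_line_def by (rule openin_topology_generated_by)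
  then have "\<forall>t\<in>V. \<exists>e>0. {t..<t+e} \<subseteq> V"
  proof (induction rule: generate_topology_on.induct)
    case Empty then show ?case by simp
  next
    case (Int a b)
    show ?case
    proof
      fix t assume "t \<in> a \<inter> b"
      then obtain e1 e2 where "e1>0" "{t..<t+e1} \<subseteq> a" "e2>0" "{t..<t+e2} \<subseteq> b"
        using Int.IH by blast
      then show "\<exists>e>0. {t..<t+e} \<subseteq> a \<inter> b"
        by (intro exI[of _ "min e1 e2"]) (auto simp: subset_iff)
    qed
  next
    case (UN K)
    then show ?case by blast
  next
    case (Basis s)
    then obtain a b where s: "s = {a..<b}" by auto
    show ?case
    proof
      fix t assume "t \<in> s"
      then show "\<exists>e>0. {t..<t+e} \<subseteq> s" using s
        by (intro exI[of _ "b - t"]) auto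
    qed
  qed
  then show ?thesis using assms(2) by blast
qed

lemma cont_right:
  assumes "continuous_map sorgenfrey_line X f" "openin X U" "f t \<in> U"
  shows "\<exists>e>0. \<forall>s. t \<le> s \<and> s < t + e \<longrightarrow> f s \<in> U"
proof -
  have "openin sorgenfrey_line {x. f x \<in> U}"
    using assms(1,2) unfolding continuous_map sorg_topspace by auto
  from sorg_open_local[OF this] assms(3) show ?thesis by fastforce
qed


lemma core:
  fixes f :: "real \<Rightarrow> 'a" and R :: "'a \<Rightarrow> 'a \<Rightarrow> bool"
  assumes cont: "continuous_map sorgenfrey_line X f"
    and opn: "open_map sorgenfrey_line X f"
    and surj: "f ` UNIV = topspace X"
    and asym: "asymmetric_on (topspace X) R"
    and ab: "a < b"
    and Eprop: "\<And>t s. t \<in> E \<Longrightarrow> t < s \<Longrightarrow> s < t + (b - a) \<Longrightarrow> f s \<in> Q \<Longrightarrow> f s \<noteq> f t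
                 \<Longrightarrow> R (f t) (f s)"
    and dens: "\<And>u v. a \<le> u \<Longrightarrow> u < v \<Longrightarrow> v \<le> b \<Longrightarrow> \<exists>t\<in>E. u < t \<and> t < v"
    and s: "a < s" "s < b"
    and cl: "\<forall>U. openin X U \<and> f s \<in> U \<longrightarrow>
        (\<exists>q \<in> (U - {f s}) \<inter> Q. is_nbhd X {z \<in> topspace X. R q z} (f s))"
  shows False
proof -
  have top: "f x \<in> topspace X" for x using surj by auto
  have "openin X (f ` {s..<b})" using opn sorg_open_basic unfolding open_map_def by blast
  moreover have "f s \<in> f ` {s..<b}" using s by auto
  ultimately obtain q where q: "q \<in> f ` {s..<b}" "q \<noteq> f s" "q \<in> Q"
    and nb: "is_nbhd X {z \<in> topspace X. R q z} (f s)"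
    using cl by blast
  obtain s' where s': "s \<le> s'" "s' < b" "q = f s'" using q(1) by auto
  have ss': "s < s'" using s' q(2) by (cases "s = s'") auto
  obtain V where V: "openin X V" "f s \<in> V" "V \<subseteq> {z \<in> topspace X. R q z}"
    using nb unfolding is_nbhd_def by blast
  obtain th where th: "th > 0" "\<And>x. s \<le> x \<Longrightarrow> x < s + th \<Longrightarrow> f x \<in> V"
    using cont_right[OF cont V(1,2)] by blast
  have "min (s + th) s' \<le> b" using s'(2) by linarith
  then obtain t where t: "t \<in> E" "s < t" "t < min (s + th) s'"
    using dens[of s "min (s + th) s'"] s s'(2) ss' th(1) by auto
  have Rqt: "R q (f t)" using th(2)[of t] t V(3) by auto
  have ne: "q \<noteq> f t"
  proof
    assume "q = f t"
    then have "R q q" using Rqt by simp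
    then show False using asym top s'(3) unfolding asymmetric_on_def by blast
  qed
  have "R (f t) q" using Eprop[of t s'] t s' s ne q(3) by auto
  then show False using Rqt asym top s'(3) unfolding asymmetric_on_def by metis
qed


lemma baire_real:
  fixes E :: "nat \<times> bool \<Rightarrow> real set"
  assumes cov: "\<And>y. \<exists>k. y \<in> E k"
  shows "\<exists>k x e. e > 0 \<and> ball x e \<subseteq> closure (E k)"
proof (rule ccontr)
  assume nex: "\<not> ?thesis"
  define G where "G = range (\<lambda>k. UNIV - closure (E k))"
  have "(UNIV::real set) \<subseteq> closure (\<Inter>G)"
  proof (rule Baire)
    show "closed (UNIV::real set)" by simp
    show "countable G" unfolding G_def by simp
    fix T assume "T \<in> G"
    then obtain k where T: "T = UNIV - closure (E k)" unfolding G_def by auto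
    have "open T" unfolding T by auto
    then show "openin (top_of_set UNIV) T \<and> UNIV \<subseteq> closure T" 
    proof (intro conjI)
      show "UNIV \<subseteq> closure T"
      proof
        fix x :: real
        show "x \<in> closure T"
        proof (rule ccontr)
          assume "x \<notin> closure T"
          then obtain e where e: "e > 0" "\<And>y. y \<in> T \<Longrightarrow> \<not> dist y x < e"
            unfolding closure_approachable by auto
          have "ball x e \<subseteq> closure (E k)"
          proof
            fix y assume "y \<in> ball x e"
            then have "dist y x < e" by (simp add: dist_commute)
            then show "y \<in> closure (E k)" using e(2)[of y] T by auto
          qed
          then show False using nex e(1) by blast
        qed
      qed
    qed simp
  qed
  moreover have "\<Inter>G = {}"
  proof -
    have "y \<notin> \<Inter>G" for y
    proof -
      obtain k where "y \<in> E k" using cov by blast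
      then have "y \<in> closure (E k)" using closure_subset by blast
      then show ?thesis unfolding G_def by (metis (no_types, lifting) DiffE INT_iff UNIV_I)
    qed
    then show ?thesis by blast
  qed
  ultimately show False by simp
qed

theorem mainTheorem11:
  fixes X :: "'a topology" and Q :: "'a set" and R :: "'a \<Rightarrow> 'a \<Rightarrow> bool"
  assumes "Hausdorff_space X"
    and "dense_in X Q"
    and "asymmetric_on (topspace X) R"
    and "bidirected X R Q"
  shows "\<not> continuous_open_image_of X sorgenfrey_line"
proof
  assume "continuous_open_image_of X sorgenfrey_line"
  then obtain f where cont: "continuous_map sorgenfrey_line X f"
    and opn: "open_map sorgenfrey_line X f" and surj: "f ` UNIV = topspace X"
    unfolding continuous_open_image_of_def sorg_topspace by blast
  have top: "f x \<in> topspace X" for x using surj by auto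
  have asym: "asymmetric_on (topspace X) R" by fact
  obtain Al Ar where dAl: "dense_in X Al" and dAr: "dense_in X Ar"
    and un: "topspace X = Al \<union> Ar" and dis: "Al \<inter> Ar = {}"
    and lr: "\<forall>x\<in>Ar. looks_right X R Q x" and ll: "\<forall>x\<in>Al. looks_left X R Q x"
    using assms(4) unfolding bidirected_def by blast
  have "\<forall>t. \<exists>e>0. (f t \<in> Ar \<longrightarrow> (\<forall>s. t < s \<and> s < t + e \<and> f s \<in> Q \<and> f s \<noteq> f t \<longrightarrow> R (f t) (f s)))
      \<and> (f t \<in> Al \<longrightarrow> (\<forall>s. t < s \<and> s < t + e \<and> f s \<in> Q \<and> f s \<noteq> f t \<longrightarrow> R (f s) (f t)))"
  proof
    fix t
    show "\<exists>e>0. (f t \<in> Ar \<longrightarrow> (\<forall>s. t < s \<and> s < t + e \<and> f s \<in> Q \<and> f s \<noteq> f t \<longrightarrow> R (f t) (f s)))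
      \<and> (f t \<in> Al \<longrightarrow> (\<forall>s. t < s \<and> s < t + e \<and> f s \<in> Q \<and> f s \<noteq> f t \<longrightarrow> R (f s) (f t)))"
    proof (cases "f t \<in> Ar")
      case True
      then obtain U where U: "openin X U" "f t \<in> U" "\<forall>y \<in> (U - {f t}) \<inter> Q. R (f t) y"
        using lr unfolding looks_right_def by blast
      obtain e where "e > 0" "\<And>s. t \<le> s \<Longrightarrow> s < t + e \<Longrightarrow> f s \<in> U"
        using cont_right[OF cont U(1,2)] by blast
      then show ?thesis using U(3) True dis
        by (intro exI[of _ e]) auto
    next
      case False
      then have A: "f t \<in> Al" using un top by auto
      then obtain U where U: "openin X U" "f t \<in> U" "\<forall>y \<in> (U - {f t}) \<inter> Q. R y (f t)"
        using ll unfolding looks_left_def by blast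
      obtain e where "e > 0" "\<And>s. t \<le> s \<Longrightarrow> s < t + e \<Longrightarrow> f s \<in> U"
        using cont_right[OF cont U(1,2)] by blast
      then show ?thesis using U(3) False
        by (intro exI[of _ e]) auto
    qed
  qed
  then obtain d where dpos: "\<And>t. d t > 0"
    and dr: "\<And>t s. f t \<in> Ar \<Longrightarrow> t < s \<Longrightarrow> s < t + d t \<Longrightarrow> f s \<in> Q \<Longrightarrow> f s \<noteq> f t \<Longrightarrow> R (f t) (f s)"
    and dl: "\<And>t s. f t \<in> Al \<Longrightarrow> t < s \<Longrightarrow> s < t + d t \<Longrightarrow> f s \<in> Q \<Longrightarrow> f s \<noteq> f t \<Longrightarrow> R (f s) (f t)"
    by metis
  define E where "E = (\<lambda>(n::nat, c::bool). {t. (if c then f t \<in> Ar else f t \<in> Al) \<and> 1 / (real n + 1) \<le> d t})"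
  have "\<exists>k. y \<in> E k" for y
  proof -
    obtain n where n: "inverse (real (Suc n)) < d y" using reals_Archimedean dpos by blast
    have "1 / (real n + 1) \<le> d y" using n by (simp add: inverse_eq_divide add.commute)
    moreover have "f y \<in> Ar \<or> f y \<in> Al" using un top by auto
    ultimately show ?thesis unfolding E_def
      by (metis (mono_tags, lifting) case_prod_conv mem_Collect_eq)
  qed
  from baire_real[OF this] obtain n c x e where e: "e > 0" "ball x e \<subseteq> closure (E (n, c))"
    by auto
  define r where "r = min e (1 / (2 * (real n + 1)))"
  have r: "r > 0" "r \<le> e" "2 * r \<le> 1 / (real n + 1)"
  proof -
    have "r \<le> 1 / (2 * (real n + 1))" unfolding r_def by linarith
    also have "\<dots> = (1 / (real n + 1)) / 2" by simp
    finally show "2 * r \<le> 1 / (real n + 1)" by (simp add: field_simps)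
  qed (use e(1) in \<open>auto simp: r_def\<close>)
  define a where "a = x - r"
  define b where "b = x + r"
  have ab: "a < b" unfolding a_def b_def using r by auto
  have ba: "b - a \<le> 1 / (real n + 1)" unfolding a_def b_def using r by auto
  have dens: "\<exists>t\<in>E (n, c). u < t \<and> t < v" if uv: "a \<le> u" "u < v" "v \<le> b" for u v
  proof -
    have "x - e < (u + v) / 2" "(u + v) / 2 < x + e" using uv r unfolding a_def b_def by (auto simp: field_simps)
    then have "(u + v) / 2 \<in> ball x e" unfolding ball_def dist_real_def by (simp add: abs_less_iff field_simps)
    then have "(u + v) / 2 \<in> closure (E (n, c))" using e(2) by blast
    then obtain y where "y \<in> E (n, c)" "dist y ((u + v) / 2) < (v - u) / 2"
      unfolding closure_approachable using uv(2) by (metis diff_gt_0_iff_gt half_gt_zero)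
    then show ?thesis unfolding dist_real_def by (intro bexI[of _ y]) (auto simp: abs_less_iff field_simps)
  qed
  have openxb: "openin X (f ` {x..<b})" using opn sorg_open_basic unfolding open_map_def by blast
  have fx: "f x \<in> f ` {x..<b}" using r unfolding b_def by auto
  have xin: "a < x" "x < b" using r unfolding a_def b_def by auto
  show False
  proof (cases c)
    case True
    have "f x \<in> X closure_of Al" using dAl top[of x] unfolding dense_in_def by simp
    then obtain y where "y \<in> Al" "y \<in> f ` {x..<b}" using openxb fx unfolding in_closure_of by blast
    then obtain s where s: "s \<in> {x..<b}" "f s \<in> Al" by blast
    show False
    proof (rule core[OF cont opn surj asym ab, of "E (n, c)" Q s])
      fix t s' assume "t \<in> E (n, c)" "t < s'" "s' < t + (b - a)" "f s' \<in> Q" "f s' \<noteq> f t"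
      then show "R (f t) (f s')" using True ba dr[of t s'] unfolding E_def by auto
    next
      show "\<And>u v. a \<le> u \<Longrightarrow> u < v \<Longrightarrow> v \<le> b \<Longrightarrow> \<exists>t\<in>E (n, c). u < t \<and> t < v" by (rule dens)
    next
      show "a < s" "s < b" using s xin by auto
    next
      show "\<forall>U. openin X U \<and> f s \<in> U \<longrightarrow>
        (\<exists>q \<in> (U - {f s}) \<inter> Q. is_nbhd X {z \<in> topspace X. R q z} (f s))"
        using ll s(2) unfolding looks_left_def by blast
    qed
  next
    case False
    have "f x \<in> X closure_of Ar" using dAr top[of x] unfolding dense_in_def by simp
    then obtain y where "y \<in> Ar" "y \<in> f ` {x..<b}" using openxb fx unfolding in_closure_of by blast
    then obtain s where s: "s \<in> {x..<b}" "f s \<in> Ar" by blast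
    have asym': "asymmetric_on (topspace X) (\<lambda>u v. R v u)"
      using asym unfolding asymmetric_on_def by blast
    show False
    proof (rule core[OF cont opn surj asym' ab, of "E (n, c)" Q s])
      fix t s' assume "t \<in> E (n, c)" "t < s'" "s' < t + (b - a)" "f s' \<in> Q" "f s' \<noteq> f t"
      then show "R (f s') (f t)" using False ba dl[of t s'] unfolding E_def by auto
    next
      show "\<And>u v. a \<le> u \<Longrightarrow> u < v \<Longrightarrow> v \<le> b \<Longrightarrow> \<exists>t\<in>E (n, c). u < t \<and> t < v" by (rule dens)
    next
      show "a < s" "s < b" using s xin by auto
    next
      show "\<forall>U. openin X U \<and> f s \<in> U \<longrightarrow>
        (\<exists>q \<in> (U - {f s}) \<inter> Q. is_nbhd X {z \<in> topspace X. R z q} (f s))"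
        using lr s(2) unfolding looks_right_def by blast
    qed
  qed
qed

end
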